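(* Let $p$ be an odd prime, let $\Delta\in\mathbb{Z}$ with $\Delta\equiv 3\pmod 4$ be a quadratic non-residue modulo $p$, and let $\mathfrak{p}=p\mathbb{Z}[\sqrt{\Delta}]$. For $0\le k\le p-1$ let $a_k=k+\sqrt{\Delta}$, and let $B_p=\prod_{0\le k\le p-1}(1-a_k^{p-1})$. Then $$B_p^{\frac{p-1}{2}}\equiv 1\pmod{\mathfrak{p}}.$$ *)

theory Defs
  imports "HOL-Number_Theory.Number_Theory"
begin

text \<open>Elements of Z[sqrt D] are represented as pairs (a, b) of integers, standing for a + b sqrt D.\<close>

type_synonym zsqrt = "int \<times> int"

definition zs_mult :: "int \<Rightarrow> zsqrt \<Rightarrow> zsqrt \<Rightarrow> zsqrt" where
  "zs_mult D x y = (fst x * fst y + D * snd x * snd y, fst x * snd y + snd x * fst y)"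

definition zs_one :: zsqrt where "zs_one = (1, 0)"

definition zs_sub :: "zsqrt \<Rightarrow> zsqrt \<Rightarrow> zsqrt" where
  "zs_sub x y = (fst x - fst y, snd x - snd y)"

fun zs_pow :: "int \<Rightarrow> zsqrt \<Rightarrow> nat \<Rightarrow> zsqrt" where
  "zs_pow D x 0 = zs_one"
| "zs_pow D x (Suc n) = zs_mult D x (zs_pow D x n)"

definition zs_prod_list :: "int \<Rightarrow> zsqrt list \<Rightarrow> zsqrt" where
  "zs_prod_list D xs = foldr (zs_mult D) xs zs_one"

text \<open>x is congruent to y modulo the ideal p Z[sqrt D]: both coordinates of x - y divisible by p.\<close>
definition zs_cong :: "int \<Rightarrow> zsqrt \<Rightarrow> zsqrt \<Rightarrow> bool" where
  "zs_cong p x y \<longleftrightarrow> p dvd fst (zs_sub x y) \<and> p dvd snd (zs_sub x y)"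

definition B_p :: "int \<Rightarrow> nat \<Rightarrow> zsqrt" where
  "B_p D p = zs_prod_list D (map (\<lambda>k. zs_sub zs_one (zs_pow D (int k, 1) (p - 1))) [0..<p])"

end

theory Submission
  imports Defs "HOL-Computational_Algebra.Polynomial" Complex_Main
begin


lemma poly_vanish_mod_p:
  fixes g :: "int poly" and p :: nat
  assumes pr: "prime p" and dg: "degree g < p" and vals: "\<forall>c<p. int p dvd poly g (int c)"
  shows "\<exists>r. g = smult (int p) r"
proof -
  have claim: "m \<le> p \<Longrightarrow> \<exists>h r. g = (\<Prod>c<m. [:- int c, 1:]) * h + smult (int p) r \<and>
      (h = 0 \<or> degree h + m \<le> degree g)" for m
  proof (induction m)
    case 0
    show ?case by (rule exI[of _ g], rule exI[of _ 0]) simp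
  next
    case (Suc m)
    then obtain h r where hr: "g = (\<Prod>c<m. [:- int c, 1:]) * h + smult (int p) r"
      and dh: "h = 0 \<or> degree h + m \<le> degree g" by auto
    define P where "P = (\<Prod>c<m. [:- int c, 1:])"
    have mp: "m < p" using Suc.prems by simp
    have pr': "prime (int p)" using pr by simp
    have nP: "\<not> int p dvd poly P (int m)"
    proof
      assume "int p dvd poly P (int m)"
      then have "int p dvd (\<Prod>c<m. int m - int c)" by (simp add: P_def poly_prod)
      then obtain c where c: "c < m" "int p dvd int m - int c"
        using prime_dvd_prod_iff[OF finite_lessThan pr', of "\<lambda>c. int m - int c" m] by auto
      then have "int p \<le> int m - int c" by (intro zdvd_imp_le) auto
      then show False using mp c by simp
    qed
    have "poly g (int m) = poly P (int m) * poly h (int m) + int p * poly r (int m)"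
      using hr by (simp add: P_def)
    then have "int p dvd poly P (int m) * poly h (int m)"
      using vals mp by (metis dvd_add_left_iff dvd_triv_left)
    then have "int p dvd poly h (int m)" using nP pr' prime_dvd_mult_iff by blast
    then obtain t where t: "poly h (int m) = int p * t" by blast
    define q where "q = synthetic_div h (int m)"
    have hq: "h = [:- int m, 1:] * q + [:int p * t:]"
      using synthetic_div_correct'[of "int m" h] t by (simp add: q_def)
    have "g = (\<Prod>c<Suc m. [:- int c, 1:]) * q + smult (int p) (r + smult t P)"
    proof -
      have e1: "P * h = (P * [:- int m, 1:]) * q + smult (int p) (smult t P)"
      proof -
        have "P * h = P * ([:- int m, 1:] * q) + P * [:int p * t:]"
          by (subst hq) (simp only: distrib_left)
        also have "P * [:int p * t:] = smult (int p) (smult t P)"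
          by (simp add: mult.commute[of P])
        finally show ?thesis by (simp only: mult.assoc)
      qed
      have e2: "(\<Prod>c<Suc m. [:- int c, 1:]) = P * [:- int m, 1:]"
        by (simp add: P_def)
      show ?thesis using hr e1 e2 unfolding P_def[symmetric] by (simp add: smult_add_right)
    qed
    moreover have "q = 0 \<or> degree q + Suc m \<le> degree g"
    proof (cases "degree h = 0")
      case True
      then show ?thesis by (simp add: q_def synthetic_div_eq_0_iff)
    next
      case False
      then have "degree h + m \<le> degree g" using dh by auto
      moreover have "degree q = degree h - 1" by (simp add: q_def degree_synthetic_div)
      ultimately show ?thesis using False by simp
    qed
    ultimately show ?case by blast
  qed
  obtain h r where hr: "g = (\<Prod>c<p. [:- int c, 1:]) * h + smult (int p) r"
      and dh: "h = 0 \<or> degree h + p \<le> degree g" using claim[of p] by auto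
  have "h = 0" using dh dg by auto
  then show ?thesis using hr by auto
qed

lemma fermat_nat_pow: assumes "prime p" shows "[c ^ p = c] (mod p)"
proof (cases "p dvd c")
  case True
  then have "[c = 0] (mod p)" by (simp add: cong_0_iff)
  moreover then have "[c ^ p = 0 ^ p] (mod p)" by (simp add: cong_pow)
  ultimately show ?thesis using prime_gt_0_nat[OF assms]
    by (metis cong_sym cong_trans power_0_left less_not_refl2)
next
  case False
  then have "[c ^ (p - 1) = 1] (mod p)" using fermat_theorem assms by blast
  then have "[c ^ (p - 1) * c = 1 * c] (mod p)" by (rule cong_scalar_right)
  moreover have "c ^ (p - 1) * c = c ^ p" using prime_gt_0_nat[OF assms]
    by (metis Suc_diff_1 power_Suc2)
  ultimately show ?thesis by simp
qed

lemma prod_X_plus: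
  fixes p :: nat
  assumes pr: "prime p"
  shows "\<exists>r::int poly. (\<Prod>k<p. [:int k, 1:]) - monom 1 p + [:0, 1:] = smult (int p) r"
proof (rule poly_vanish_mod_p[OF pr])
  let ?Q = "(\<Prod>k<p. [:int k, 1:]) :: int poly"
  have p2: "p \<ge> 2" using prime_ge_2_nat[OF pr] .
  have dQ: "degree ?Q = p"
    by (subst degree_prod_eq_sum_degree) auto
  have lQ: "coeff ?Q p = 1"
    using lead_coeff_prod[of "\<lambda>k. [:int k, 1:]" "{..<p}"] dQ by simp
  show "degree (?Q - monom 1 p + [:0, 1:]) < p"
  proof -
    have "degree (?Q - monom 1 p + [:0, 1:]) \<le> p - 1"
    proof (rule degree_le, intro allI impI)
      fix i assume i: "p - 1 < i"
      show "coeff (?Q - monom 1 p + [:0, 1:]) i = 0"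
      proof (cases "i = p")
        case True then show ?thesis using lQ p2 by (simp add: coeff_pCons split: nat.splits)
      next
        case False
        then have "i > p" using i by simp
        then have "coeff ?Q i = 0" using dQ by (simp add: coeff_eq_0)
        then show ?thesis using \<open>i > p\<close> p2 by (simp add: coeff_pCons split: nat.splits)
      qed
    qed
    then show ?thesis using p2 by simp
  qed
  show "\<forall>c<p. int p dvd poly (?Q - monom 1 p + [:0, 1:]) (int c)"
  proof (intro allI impI)
    fix c assume c: "c < p"
    define k where "k = (p - c mod p) mod p"
    have k: "k < p" using p2 by (simp add: k_def)
    have "p dvd c + k"
    proof -
      have "(c + k) mod p = 0" unfolding k_def
        by (metis add_diff_inverse_nat mod_add_left_eq mod_add_right_eq mod_less_divisor mod_self
            nat_less_le not_less prime_gt_0_nat pr)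
      then show ?thesis by auto
    qed
    then have "int p dvd int c + int k" by (metis of_nat_add int_dvd_int_iff)
    moreover have "(int c + int k) dvd (\<Prod>k<p. int c + int k)"
      using k by (intro dvd_prodI) auto
    ultimately have d1: "int p dvd (\<Prod>k<p. int c + int k)" by (rule dvd_trans)
    have "[int c ^ p = int c] (mod int p)" using fermat_nat_pow[OF pr, of c]
      by (metis cong_int_iff of_nat_power)
    then have d2: "int p dvd int c ^ p - int c" by (simp add: cong_iff_dvd_diff)
    have eq: "poly (?Q - monom 1 p + [:0, 1:]) (int c) = (\<Prod>k<p. int c + int k) - (int c ^ p - int c)"
      by (simp add: poly_prod poly_monom add.commute)
    show "int p dvd poly (?Q - monom 1 p + [:0, 1:]) (int c)" unfolding eq using d1 d2 by (rule dvd_diff)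
  qed
qed

lemma mpi_add: "map_poly (of_int :: int \<Rightarrow> 'a::comm_ring_1) (a + b) = map_poly of_int a + map_poly of_int b"
  by (intro poly_eqI) (simp add: coeff_map_poly)
lemma mpi_diff: "map_poly (of_int :: int \<Rightarrow> 'a::comm_ring_1) (a - b) = map_poly of_int a - map_poly of_int b"
  by (intro poly_eqI) (simp add: coeff_map_poly)
lemma mpi_mult: "map_poly (of_int :: int \<Rightarrow> 'a::comm_ring_1) (a * b) = map_poly of_int a * map_poly of_int b"
  by (intro poly_eqI) (simp add: coeff_map_poly coeff_mult)
lemma mpi_prod: "map_poly (of_int :: int \<Rightarrow> 'a::comm_ring_1) (\<Prod>k\<in>A. f k) = (\<Prod>k\<in>A. map_poly of_int (f k))"
  by (induction A rule: infinite_finite_induct) (auto simp: mpi_mult)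

lemma prod_plus_complex:
  fixes p :: nat
  assumes pr: "prime p"
  shows "\<exists>r::int poly. \<forall>x::complex. (\<Prod>k<p. x + of_nat k) - x ^ p + x = of_nat p * poly (map_poly of_int r) x"
proof -
  obtain r where r: "(\<Prod>k<p. [:int k, 1:]) - monom 1 p + [:0, 1:] = smult (int p) (r :: int poly)"
    using prod_X_plus[OF pr] by blast
  have "\<forall>x::complex. (\<Prod>k<p. x + of_nat k) - x ^ p + x = of_nat p * poly (map_poly of_int r) x"
  proof
    fix x :: complex
    have "poly (map_poly of_int ((\<Prod>k<p. [:int k, 1:]) - monom 1 p + [:0, 1:])) x =
          poly (map_poly of_int (smult (int p) r)) x" using r by simp
    then show "(\<Prod>k<p. x + of_nat k) - x ^ p + x = of_nat p * poly (map_poly of_int r) x"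
      by (simp add: mpi_add mpi_diff mpi_prod map_poly_monom map_poly_pCons map_poly_smult poly_prod poly_monom add.commute)
  qed
  then show ?thesis by blast
qed



definition sD :: "int \<Rightarrow> complex" where "sD D = csqrt (of_int D)"

lemma sD_sq: "sD D * sD D = of_int D"
  using power2_csqrt[of "of_int D"] by (simp add: sD_def power2_eq_square)

definition inZ :: "int \<Rightarrow> complex \<Rightarrow> bool" where
  "inZ D x \<longleftrightarrow> (\<exists>a b. x = of_int a + of_int b * sD D)"

definition cg :: "int \<Rightarrow> int \<Rightarrow> complex \<Rightarrow> complex \<Rightarrow> bool" where
  "cg D p x y \<longleftrightarrow> (\<exists>z. inZ D z \<and> x - y = of_int p * z)"

lemma inZ_of_int [simp]: "inZ D (of_int a)"
  unfolding inZ_def by (rule exI[of _ a], rule exI[of _ 0]) simp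
lemma inZ_of_nat [simp]: "inZ D (of_nat a)"
  using inZ_of_int[of D "int a"] by simp
lemma inZ_0 [simp]: "inZ D 0" using inZ_of_int[of D 0] by simp
lemma inZ_1 [simp]: "inZ D 1" using inZ_of_int[of D 1] by simp
lemma inZ_s [simp]: "inZ D (sD D)"
  unfolding inZ_def by (rule exI[of _ 0], rule exI[of _ 1]) simp
lemma inZ_add [simp]: "inZ D x \<Longrightarrow> inZ D y \<Longrightarrow> inZ D (x + y)"
  unfolding inZ_def
  by (auto, rule_tac x="a + aa" in exI, rule_tac x="b + ba" in exI) (simp add: algebra_simps)
lemma inZ_uminus [simp]: "inZ D x \<Longrightarrow> inZ D (- x)"
  unfolding inZ_def
  by (auto, rule_tac x="- a" in exI, rule_tac x="- b" in exI) (simp add: algebra_simps)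
lemma inZ_diff [simp]: "inZ D x \<Longrightarrow> inZ D y \<Longrightarrow> inZ D (x - y)"
  using inZ_add[of D x "- y"] by simp
lemma inZ_mult [simp]: "inZ D x \<Longrightarrow> inZ D y \<Longrightarrow> inZ D (x * y)"
proof -
  assume "inZ D x" "inZ D y"
  then obtain a b c d where x: "x = of_int a + of_int b * sD D" and y: "y = of_int c + of_int d * sD D"
    unfolding inZ_def by blast
  have "x * y = of_int (a * c + D * b * d) + of_int (a * d + b * c) * sD D"
    unfolding x y using sD_sq[of D] by (simp add: algebra_simps)
  then show ?thesis unfolding inZ_def by blast
qed
lemma inZ_power [simp]: "inZ D x \<Longrightarrow> inZ D (x ^ n)"
  by (induction n) auto
lemma inZ_prod: "(\<And>k. k \<in> A \<Longrightarrow> inZ D (f k)) \<Longrightarrow> inZ D (\<Prod>k\<in>A. f k)"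
  by (induction A rule: infinite_finite_induct) auto
lemma inZ_sum: "(\<And>k. k \<in> A \<Longrightarrow> inZ D (f k)) \<Longrightarrow> inZ D (\<Sum>k\<in>A. f k)"
  by (induction A rule: infinite_finite_induct) auto

lemma cg_refl [simp]: "cg D p x x"
  unfolding cg_def by (rule exI[of _ 0]) simp
lemma cg_sym: "cg D p x y \<Longrightarrow> cg D p y x"
  unfolding cg_def by (auto, rule_tac x="- z" in exI) (simp add: algebra_simps)
lemma cg_trans: "cg D p x y \<Longrightarrow> cg D p y z \<Longrightarrow> cg D p x z"
proof -
  assume "cg D p x y" "cg D p y z"
  then obtain u v where "inZ D u" "x - y = of_int p * u" "inZ D v" "y - z = of_int p * v"
    unfolding cg_def by blast
  then have "inZ D (u + v) \<and> x - z = of_int p * (u + v)" by (simp add: algebra_simps)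
  then show ?thesis unfolding cg_def by blast
qed
lemma cg_add: "cg D p x x' \<Longrightarrow> cg D p y y' \<Longrightarrow> cg D p (x + y) (x' + y')"
  unfolding cg_def by (auto, rule_tac x="z + za" in exI) (simp add: algebra_simps)
lemma cg_diff: "cg D p x x' \<Longrightarrow> cg D p y y' \<Longrightarrow> cg D p (x - y) (x' - y')"
  unfolding cg_def by (auto, rule_tac x="z - za" in exI) (simp add: algebra_simps)
lemma cg_mult: "cg D p x x' \<Longrightarrow> cg D p y y' \<Longrightarrow> inZ D x' \<Longrightarrow> inZ D y \<Longrightarrow> cg D p (x * y) (x' * y')"
proof -
  assume "cg D p x x'" "cg D p y y'" and i: "inZ D x'" "inZ D y"
  then obtain z w where z: "inZ D z" "x - x' = of_int p * z" and w: "inZ D w" "y - y' = of_int p * w"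
    unfolding cg_def by blast
  have "x * y - x' * y' = (x - x') * y + x' * (y - y')" by (simp add: algebra_simps)
  also have "\<dots> = of_int p * (z * y + x' * w)" using z w by (simp add: algebra_simps)
  finally show ?thesis unfolding cg_def using z w i by (intro exI[of _ "z * y + x' * w"]) auto
qed
lemma cg_power: "cg D p x y \<Longrightarrow> inZ D x \<Longrightarrow> inZ D y \<Longrightarrow> cg D p (x ^ n) (y ^ n)"
  by (induction n) (auto intro: cg_mult)
lemma cg_prod: "(\<And>k. k \<in> A \<Longrightarrow> cg D p (f k) (g k) \<and> inZ D (f k) \<and> inZ D (g k)) \<Longrightarrow>
    cg D p (\<Prod>k\<in>A. f k) (\<Prod>k\<in>A. g k)"
proof (induction A rule: infinite_finite_induct)
  case (insert a A)
  then show ?case by (auto intro!: cg_mult inZ_prod)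
qed auto
lemma cg_of_int: "p dvd a - b \<Longrightarrow> cg D p (of_int a) (of_int b)"
proof -
  assume "p dvd a - b"
  then obtain k where "a - b = p * k" by blast
  then have "of_int a - of_int b = (of_int p * of_int k :: complex)" by (metis of_int_diff of_int_mult)
  then show ?thesis unfolding cg_def by (intro exI[of _ "of_int k"]) simp
qed
lemma cg_pmult: "inZ D z \<Longrightarrow> cg D p (of_int p * z) 0"
  unfolding cg_def by auto



lemma sq_mod4: "(a::int)^2 mod 4 = (if even a then 0 else 1)"
proof (cases "even a")
  case True
  then obtain k where "a = 2 * k" by blast
  then show ?thesis by (simp add: power2_eq_square)
next
  case False
  then obtain k where "a = 2 * k + 1" using oddE by blast
  then have "a^2 = 4 * (k*k + k) + 1" by (simp add: power2_eq_square algebra_simps)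
  moreover have "(4 * t + 1) mod 4 = (1::int)" for t by presburger
  ultimately show ?thesis using False by metis
qed

lemma nonsq_aux:
  assumes D: "(D::int) mod 4 = 3"
  shows "\<forall>a b. nat \<bar>b\<bar> = n \<longrightarrow> a^2 = D * b^2 \<longrightarrow> b = 0"
proof (induction n rule: less_induct)
  case (less n)
  show ?case
  proof (intro allI impI)
    fix a b :: int
    assume nb: "nat \<bar>b\<bar> = n" and ab: "a^2 = D * b^2"
    show "b = 0"
    proof (rule ccontr)
      assume b0: "b \<noteq> 0"
      show False
      proof (cases "even b")
        case False
        then have b1: "b^2 mod 4 = 1" by (simp add: sq_mod4)
        have "(D * b^2) mod 4 = ((D mod 4) * (b^2 mod 4)) mod 4" by (rule mod_mult_eq[symmetric])
        also have "\<dots> = 3" using D b1 by simp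
        finally have "a^2 mod 4 = 3" using ab by simp
        then show False by (simp add: sq_mod4 split: if_splits)
      next
        case True
        then obtain c where c: "b = 2 * c" by blast
        have "a^2 = 4 * (D * c^2)" using ab c by (simp add: power2_eq_square algebra_simps)
        then have "a^2 mod 4 = 0" by simp
        then have "even a" by (simp add: sq_mod4 split: if_splits)
        then obtain e where e: "a = 2 * e" by blast
        have "4 * e^2 = 4 * (D * c^2)" using ab c e by (simp add: power2_eq_square algebra_simps)
        then have ec: "e^2 = D * c^2" by simp
        have lt: "nat \<bar>c\<bar> < n" using c b0 nb by auto
        have "c = 0" using less[OF lt] ec by blast
        then show False using c b0 by simp
      qed
    qed
  qed
qed

lemma nonsq: "(D::int) mod 4 = 3 \<Longrightarrow> a^2 = D * b^2 \<Longrightarrow> b = 0"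
  using nonsq_aux by blast

lemma uniq0:
  assumes "D mod 4 = 3" and "of_int a + of_int b * sD D = 0"
  shows "a = 0 \<and> b = 0"
proof -
  have "of_int b * sD D = - of_int a" using assms(2) by (simp add: add_eq_0_iff)
  then have "(of_int b * sD D) * (of_int b * sD D) = (- of_int a) * (- of_int a :: complex)" by simp
  then have "of_int (D * b^2) = (of_int (a^2) :: complex)"
    using sD_sq[of D] by (simp add: power2_eq_square algebra_simps)
  then have "a^2 = D * b^2" by (metis of_int_eq_iff)
  then have "b = 0" using nonsq assms(1) by blast
  then show ?thesis using assms(2) by simp
qed

definition psi :: "int \<Rightarrow> zsqrt \<Rightarrow> complex" where
  "psi D x = of_int (fst x) + of_int (snd x) * sD D"

lemma cg_to_zs:
  assumes "D mod 4 = 3" and "cg D p (psi D x) (psi D y)"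
  shows "zs_cong p x y"
proof -
  obtain z where z: "inZ D z" "psi D x - psi D y = of_int p * z" using assms(2) unfolding cg_def by blast
  then obtain a b where ab: "z = of_int a + of_int b * sD D" unfolding inZ_def by blast
  have "of_int (fst x - fst y - p * a) + of_int (snd x - snd y - p * b) * sD D = 0"
    using z(2) unfolding ab psi_def by (simp add: algebra_simps)
  then have "fst x - fst y - p * a = 0 \<and> snd x - snd y - p * b = 0" using uniq0 assms(1) by blast
  then show ?thesis unfolding zs_cong_def zs_sub_def by simp
qed

lemma psi_mult: "psi D (zs_mult D x y) = psi D x * psi D y"
  unfolding psi_def zs_mult_def using sD_sq[of D] by (simp add: algebra_simps)
lemma psi_one [simp]: "psi D zs_one = 1"
  unfolding psi_def zs_one_def by simp
lemma psi_sub: "psi D (zs_sub x y) = psi D x - psi D y"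
  unfolding psi_def zs_sub_def by (simp add: algebra_simps)
lemma psi_pow: "psi D (zs_pow D x n) = psi D x ^ n"
  by (induction n) (simp_all add: psi_mult)
lemma psi_prod_list: "psi D (zs_prod_list D xs) = prod_list (map (psi D) xs)"
  unfolding zs_prod_list_def by (induction xs) (simp_all add: psi_mult)
lemma prod_list_upt: "prod_list (map f [0..<n]) = (\<Prod>k<n. f k)"
  by (induction n) (simp_all add: mult.commute)

lemma psi_B: "psi D (B_p D p) = (\<Prod>k<p. 1 - (of_nat k + sD D) ^ (p - 1))"
proof -
  have e: "psi D (int k, 1) = of_nat k + sD D" for k unfolding psi_def by simp
  show ?thesis unfolding B_p_def psi_prod_list by (simp add: prod_list_upt psi_sub psi_pow e o_def)
qed



lemma frob:
  assumes pr: "prime p" and x: "inZ D x" and y: "inZ D y"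
  shows "cg D (int p) ((x + y) ^ p) (x ^ p + y ^ p)"
proof -
  define f where "f k = of_nat (p choose k) * x ^ k * y ^ (p - k)" for k
  define A where "A = {..p} - {0, p}"
  have p0: "p \<noteq> 0" using pr by auto
  have "(x + y) ^ p = (\<Sum>k\<le>p. f k)" unfolding f_def by (rule binomial_ring)
  also have "{..p} = insert 0 (insert p A)" unfolding A_def by auto
  also have "(\<Sum>k\<in>insert 0 (insert p A). f k) = f 0 + (f p + sum f A)"
    using p0 by (simp add: A_def)
  also have "f 0 = y ^ p" by (simp add: f_def)
  also have "f p = x ^ p" by (simp add: f_def)
  also have "sum f A = of_int (int p) * (\<Sum>k\<in>A. of_nat ((p choose k) div p) * x ^ k * y ^ (p - k))"
  proof -
    have "f k = of_int (int p) * (of_nat ((p choose k) div p) * x ^ k * y ^ (p - k))" if "k \<in> A" for k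
    proof -
      have "p dvd (p choose k)" using that pr p0 by (intro dvd_choose_prime) (auto simp: A_def)
      then have "p choose k = p * ((p choose k) div p)" by simp
      then have "(of_nat (p choose k) :: complex) = of_nat p * of_nat ((p choose k) div p)"
        by (metis of_nat_mult)
      then show ?thesis unfolding f_def by simp
    qed
    then show ?thesis by (simp add: sum_distrib_left)
  qed
  finally have e: "(x + y) ^ p - (x ^ p + y ^ p) =
      of_int (int p) * (\<Sum>k\<in>A. of_nat ((p choose k) div p) * x ^ k * y ^ (p - k))"
    by (simp add: algebra_simps)
  have "inZ D (\<Sum>k\<in>A. of_nat ((p choose k) div p) * x ^ k * y ^ (p - k))"
    using x y by (intro inZ_sum) auto
  then show ?thesis unfolding cg_def using e by blast
qed


lemma inZ_numeral [simp]: "inZ D (numeral n)"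
  using inZ_of_nat[of D "numeral n"] by simp

theorem lemma2p2:
  fixes p :: nat and D :: int
  assumes "prime p" and "odd p"
    and "D mod 4 = 3"
    and "\<not> QuadRes (int p) D"
  shows "zs_cong (int p) (zs_pow D (B_p D p) ((p - 1) div 2)) zs_one"
proof -
  note pr = assms(1) and D4 = assms(3)
  have pr': "prime (int p)" using pr by simp
  have p2: "p > 2" using assms(1,2) prime_ge_2_nat[OF pr] by (metis le_neq_implies_less dvd_refl)
  define s where "s = sD D"
  define h where "h = (p - 1) div 2"
  have ph: "p = Suc (2 * h)" using assms(2) p2 unfolding h_def by presburger
  have si [simp]: "inZ D s" unfolding s_def by simp
  have nD: "\<not> int p dvd D"
  proof
    assume "int p dvd D"
    then have "[0 ^ 2 = D] (mod int p)" by (simp add: cong_0_iff cong_sym_eq)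
    then show False using assms(4) unfolding QuadRes_def by blast
  qed
  have leg: "Legendre D (int p) = -1"
    using nD assms(4) unfolding Legendre_def by (simp add: cong_0_iff)
  have "[- 1 = D ^ h] (mod int p)" using euler_criterion[OF pr p2, of D] leg by (simp add: h_def)
  then have "int p dvd - 1 - D ^ h" by (simp add: cong_iff_dvd_diff)
  then have "int p dvd - (- 1 - D ^ h)" by (simp only: dvd_minus_iff)
  then have dh: "int p dvd D ^ h - (- 1)" by (simp add: algebra_simps)
  have S1: "cg D (int p) (s ^ p) (- s)"
  proof -
    have "s ^ p = s * (s ^ 2) ^ h" unfolding ph by (simp add: power_mult)
    also have "s ^ 2 = of_int D" unfolding s_def power2_eq_square by (rule sD_sq)
    finally have "s ^ p = of_int (D ^ h) * s" by simp
    moreover have "cg D (int p) (of_int (D ^ h) * s) (of_int (- 1) * s)"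
      by (rule cg_mult[OF cg_of_int[OF dh] cg_refl]) auto
    ultimately show ?thesis by simp
  qed
  have S2: "cg D (int p) ((of_nat k + s) ^ p) (of_nat k - s)" for k
  proof -
    have "[k ^ p = k] (mod p)" by (rule fermat_nat_pow[OF pr])
    then have "int p dvd int (k ^ p) - int k"
      by (metis cong_int_iff cong_iff_dvd_diff)
    then have "cg D (int p) (of_int (int (k ^ p))) (of_int (int k))" by (rule cg_of_int)
    then have c1: "cg D (int p) ((of_nat k) ^ p) (of_nat k)" by simp
    have "cg D (int p) ((of_nat k) ^ p + s ^ p) (of_nat k + - s)" by (rule cg_add[OF c1 S1])
    then have "cg D (int p) ((of_nat k) ^ p + s ^ p) (of_nat k - s)" by simp
    then show ?thesis using frob[OF pr, of D "of_nat k" s] cg_trans by auto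
  qed
  define U where "U = (\<Prod>k<p. of_nat k + s)"
  have Ui: "inZ D U" unfolding U_def by (intro inZ_prod) auto
  have S3: "cg D (int p) U (- s - s)"
  proof -
    obtain r where r: "\<forall>x::complex. (\<Prod>k<p. x + of_nat k) - x ^ p + x = of_nat p * poly (map_poly of_int r) x"
      using prod_plus_complex[OF pr] by blast
    have "inZ D (poly (map_poly of_int r) s)"
      unfolding poly_altdef by (intro inZ_sum) (simp add: coeff_map_poly)
    moreover have "U - (s ^ p - s) = of_int (int p) * poly (map_poly of_int r) s"
      using r[rule_format, of s] unfolding U_def by (simp add: add.commute algebra_simps)
    ultimately have "cg D (int p) U (s ^ p - s)" unfolding cg_def by blast
    moreover have "cg D (int p) (s ^ p - s) (- s - s)" by (rule cg_diff[OF S1 cg_refl])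
    ultimately show ?thesis by (rule cg_trans)
  qed
  define e where "e k = 1 - (of_nat k + s) ^ (p - 1)" for k
  define B where "B = (\<Prod>k<p. e k)"
  have ei: "inZ D (e k)" for k unfolding e_def by simp
  have Bi: "inZ D B" unfolding B_def by (intro inZ_prod) (simp add: ei)
  have S4: "cg D (int p) ((of_nat k + s) * e k) (s + s)" for k
  proof -
    have "(of_nat k + s) * e k = (of_nat k + s) - (of_nat k + s) ^ p"
      unfolding e_def ph by (simp add: algebra_simps)
    moreover have "cg D (int p) ((of_nat k + s) - (of_nat k + s) ^ p) ((of_nat k + s) - (of_nat k - s))"
      by (rule cg_diff[OF cg_refl S2])
    ultimately show ?thesis by simp
  qed
  have "U * B = (\<Prod>k<p. (of_nat k + s) * e k)" unfolding U_def B_def by (simp add: prod.distrib)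
  moreover have "cg D (int p) (\<Prod>k<p. (of_nat k + s) * e k) (\<Prod>k<p. s + s)"
    by (rule cg_prod) (intro conjI S4 ei inZ_add inZ_mult si inZ_of_nat)
  ultimately have c0: "cg D (int p) (U * B) (\<Prod>k<p. s + s)" by simp
  have "(\<Prod>k<p. s + s) = (s + s) ^ p" by simp
  also have "\<dots> = of_nat (2 ^ p) * s ^ p" by (simp add: mult_2[symmetric] power_mult_distrib)
  finally have e2: "(\<Prod>k<p. s + s) = of_nat (2 ^ p) * s ^ p" .
  have "cg D (int p) (of_nat (2 ^ p) * s ^ p) (2 * (- s))"
  proof -
    have "[2 ^ p = 2] (mod p)" by (rule fermat_nat_pow[OF pr])
    then have "int p dvd int (2 ^ p) - int 2" by (metis cong_int_iff cong_iff_dvd_diff)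
    then have "cg D (int p) (of_int (int (2 ^ p))) (of_int (int 2))" by (rule cg_of_int)
    then have "cg D (int p) (of_nat (2 ^ p)) 2" by simp
    then show ?thesis by (rule cg_mult[OF _ S1]) auto
  qed
  then have c1: "cg D (int p) (U * B) (2 * (- s))" using cg_trans[OF c0] e2 by simp
  have c2: "cg D (int p) (U * B) ((- s - s) * B)" by (rule cg_mult[OF S3 cg_refl]) (auto simp: Bi)
  have c3: "cg D (int p) ((- s - s) * B) (2 * (- s))" using cg_trans[OF cg_sym[OF c2] c1] .
  obtain z where z: "inZ D z" "(- s - s) * B - 2 * (- s) = of_int (int p) * z"
    using c3 unfolding cg_def by blast
  obtain x y where xy: "B = of_int x + of_int y * s" using Bi unfolding inZ_def s_def by blast
  obtain a b where ab: "z = of_int a + of_int b * s" using z(1) unfolding inZ_def s_def by blast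
  have ss: "s * s = of_int D" unfolding s_def by (rule sD_sq)
  have "(- s - s) * B - 2 * (- s) = - 2 * of_int y * (s * s) + (2 - 2 * of_int x) * s"
    unfolding xy by (simp add: algebra_simps)
  also have "\<dots> = of_int (- 2 * D * y) + of_int (2 - 2 * x) * s" unfolding ss by simp
  finally have "of_int (- 2 * D * y) + of_int (2 - 2 * x) * s = of_int (int p) * (of_int a + of_int b * s)"
    using z(2) ab by simp
  then have "of_int (- 2 * D * y - int p * a) + of_int (2 - 2 * x - int p * b) * sD D = 0"
    unfolding s_def by (simp add: algebra_simps)
  then have "- 2 * D * y - int p * a = 0 \<and> 2 - 2 * x - int p * b = 0" using uniq0 D4 by blast
  then have "2 * (D * y) = int p * (- a)" and "2 * (1 - x) = int p * b" by (simp_all add: algebra_simps)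
  then have d1: "int p dvd 2 * (D * y)" and d2: "int p dvd 2 * (1 - x)" by (metis dvd_triv_left)+
  have n2: "\<not> int p dvd 2" using p2 by (auto dest: zdvd_imp_le)
  have "int p dvd y" using d1 n2 nD pr' by (simp add: prime_dvd_mult_iff)
  moreover have "int p dvd 1 - x" using prime_dvd_mult_iff[OF pr', of 2 "1 - x"] d2 n2 by blast
  ultimately obtain y' x' where y': "y = int p * y'" and x': "1 - x = int p * x'" by (metis dvdE)
  have xx: "x = 1 - int p * x'" using x' by simp
  have "B - 1 = of_int (int p) * (of_int (- x') + of_int y' * s)"
    unfolding xy xx y' by (simp add: algebra_simps)
  then have "cg D (int p) B 1" unfolding cg_def by (intro exI[of _ "of_int (- x') + of_int y' * s"]) simp
  then have "cg D (int p) (B ^ h) (1 ^ h)" by (rule cg_power) (auto simp: Bi)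
  then have "cg D (int p) (psi D (zs_pow D (B_p D p) h)) (psi D zs_one)"
    by (simp add: psi_pow psi_B B_def e_def s_def)
  then show ?thesis unfolding h_def[symmetric] by (rule cg_to_zs[OF D4])
qed

end
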